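(* Let $X$ be a ball quasi-Banach function space on $\mathbb R^n$ and $\theta\in(0,1)$. Assume that there exists $r\in(0,\infty)$ such that $X^{1/r}$ is a ball Banach function space. Then $$(X,L^\infty(\mathbb R^n))_{\theta,\infty}=(WX)^{1/(1-\theta)}$$ with equivalent quasi-norms.
   Context: A ball quasi-Banach function space is a quasi-Banach space $X$ of measurable functions on $\mathbb R^n$ such that: $\|f\|_X=0$ implies $f=0$ a.e.; $|g|\le|f|$ a.e. implies $\|g\|_X\le\|f\|_X$; $0\le f_m\uparrow f$ a.e. implies $\|f_m\|_X\uparrow\|f\|_X$; and $\mathbf 1_B\in X$ for every ball $B$. It is a ball Banach function space if moreover $\|\cdot\|_X$ satisfies the triangle inequality and for every ball $B$ there is $C_B$ with $\int_B|f|\le C_B\|f\|_X$. For $p\in(0,\infty)$, $Y^p:=\{f:|f|^p\in Y\}$ with $\|f\|_{Y^p}:=\||f|^p\|_Y^{1/p}$. $WX$ is the set of measurable $f$ with $\|f\|_{WX}:=\sup_{\alpha>0}\alpha\|\mathbf 1_{\{x:|f(x)|>\alpha\}}\|_X<\infty$. Real interpolation: $K(t,f;X_0,X_1):=\inf\{\|f_0\|_{X_0}+t\|f_1\|_{X_1}:f=f_0+f_1,\ f_i\in X_i\}$, and $(X_0,X_1)_{\theta,\infty}$ is the set of $f\in X_0+X_1$ with $\|f\|_{\theta,\infty}:=\sup_{t>0}t^{-\theta}K(t,f;X_0,X_1)<\infty$. *)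

theory Defs
  imports "HOL-Analysis.Analysis"
begin

text \<open>A (quasi-)norm on measurable functions on the Euclidean space 'a is modelled as an
extended-nonnegative valued functional N; the space is X = {f measurable. N f < top}.\<close>

definition epowr :: "ennreal \<Rightarrow> real \<Rightarrow> ennreal" where
  "epowr x p = (if x = top then top else ennreal (enn2real x powr p))"

definition quasi_banach_fs :: "(('a::euclidean_space \<Rightarrow> real) \<Rightarrow> ennreal) \<Rightarrow> bool" where
  "quasi_banach_fs N \<longleftrightarrow>
     (\<forall>f c. f \<in> borel_measurable lebesgue \<longrightarrow> N (\<lambda>x. c * f x) = ennreal \<bar>c\<bar> * N f) \<and>
     (\<exists>K::real. K \<ge> 1 \<and> (\<forall>f g. f \<in> borel_measurable lebesgue \<longrightarrow> g \<in> borel_measurable lebesgue \<longrightarrow>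
         N (\<lambda>x. f x + g x) \<le> ennreal K * (N f + N g))) \<and>
     (\<forall>F::nat \<Rightarrow> 'a \<Rightarrow> real.
        (\<forall>k. F k \<in> borel_measurable lebesgue \<and> N (F k) < top) \<longrightarrow>
        (\<forall>e>0. \<exists>M. \<forall>k\<ge>M. \<forall>l\<ge>M. N (\<lambda>x. F k x - F l x) < ennreal e) \<longrightarrow>
        (\<exists>f \<in> borel_measurable lebesgue. N f < top \<and> (\<lambda>k. N (\<lambda>x. F k x - f x)) \<longlonglongrightarrow> 0))"

definition ball_quasi_banach_fs :: "(('a::euclidean_space \<Rightarrow> real) \<Rightarrow> ennreal) \<Rightarrow> bool" where
  "ball_quasi_banach_fs N \<longleftrightarrow>
     quasi_banach_fs N \<and>
     (\<forall>f \<in> borel_measurable lebesgue. N f = 0 \<longrightarrow> (AE x in lebesgue. f x = 0)) \<and>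
     (\<forall>f g. f \<in> borel_measurable lebesgue \<longrightarrow> g \<in> borel_measurable lebesgue \<longrightarrow>
        (AE x in lebesgue. \<bar>g x\<bar> \<le> \<bar>f x\<bar>) \<longrightarrow> N g \<le> N f) \<and>
     (\<forall>(F::nat \<Rightarrow> 'a \<Rightarrow> real) f. (\<forall>m. F m \<in> borel_measurable lebesgue) \<longrightarrow> f \<in> borel_measurable lebesgue \<longrightarrow>
        (AE x in lebesgue. (\<forall>m. 0 \<le> F m x) \<and> incseq (\<lambda>m. F m x) \<and> (\<lambda>m. F m x) \<longlonglongrightarrow> f x) \<longrightarrow>
        incseq (\<lambda>m. N (F m)) \<and> (\<lambda>m. N (F m)) \<longlonglongrightarrow> N f) \<and>
     (\<forall>c r. r > 0 \<longrightarrow> N (indicator (ball c r)) < top)"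

definition ball_banach_fs :: "(('a::euclidean_space \<Rightarrow> real) \<Rightarrow> ennreal) \<Rightarrow> bool" where
  "ball_banach_fs N \<longleftrightarrow>
     ball_quasi_banach_fs N \<and>
     (\<forall>f g. f \<in> borel_measurable lebesgue \<longrightarrow> g \<in> borel_measurable lebesgue \<longrightarrow>
         N (\<lambda>x. f x + g x) \<le> N f + N g) \<and>
     (\<forall>c r. r > 0 \<longrightarrow> (\<exists>C::real. \<forall>f \<in> borel_measurable lebesgue.
         (\<integral>\<^sup>+x\<in>ball c r. ennreal \<bar>f x\<bar> \<partial>lebesgue) \<le> ennreal C * N f))"

text \<open>Convexification: norm of Y^p, i.e. f \<mapsto> N(|f|^p)^(1/p).\<close>
definition convexify :: "(('a \<Rightarrow> real) \<Rightarrow> ennreal) \<Rightarrow> real \<Rightarrow> ('a \<Rightarrow> real) \<Rightarrow> ennreal" where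
  "convexify N p f = epowr (N (\<lambda>x. \<bar>f x\<bar> powr p)) (1 / p)"

definition weak_norm :: "(('a \<Rightarrow> real) \<Rightarrow> ennreal) \<Rightarrow> ('a \<Rightarrow> real) \<Rightarrow> ennreal" where
  "weak_norm N f = (SUP \<alpha>\<in>{0<..}. ennreal \<alpha> * N (indicator {x. \<bar>f x\<bar> > \<alpha>}))"

definition Linf_norm :: "('a::euclidean_space \<Rightarrow> real) \<Rightarrow> ennreal" where
  "Linf_norm f = Inf {C. AE x in lebesgue. ennreal \<bar>f x\<bar> \<le> C}"

definition K_fun :: "(('a::euclidean_space \<Rightarrow> real) \<Rightarrow> ennreal) \<Rightarrow> (('a \<Rightarrow> real) \<Rightarrow> ennreal)
     \<Rightarrow> real \<Rightarrow> ('a \<Rightarrow> real) \<Rightarrow> ennreal" where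
  "K_fun N0 N1 t f = Inf {N0 f0 + ennreal t * N1 f1 | f0 f1.
      f0 \<in> borel_measurable lebesgue \<and> f1 \<in> borel_measurable lebesgue \<and>
      N0 f0 < top \<and> N1 f1 < top \<and> (\<forall>x. f x = f0 x + f1 x)}"

text \<open>Norm of (X0,X1)_{\<theta>,\<infinity>}; the space is the set of f with finite norm (K is top off X0+X1).\<close>
definition interp_norm :: "(('a::euclidean_space \<Rightarrow> real) \<Rightarrow> ennreal) \<Rightarrow> (('a \<Rightarrow> real) \<Rightarrow> ennreal)
     \<Rightarrow> real \<Rightarrow> ('a \<Rightarrow> real) \<Rightarrow> ennreal" where
  "interp_norm N0 N1 \<theta> f = (SUP t\<in>{0<..}. ennreal (t powr (-\<theta>)) * K_fun N0 N1 t f)"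

end

theory Submission
  imports Defs
begin

lemma epowr_ennreal: "0 \<le> c \<Longrightarrow> epowr (ennreal c) p = ennreal (c powr p)"
  by (simp add: epowr_def)

lemma epowr_mono: "x \<le> y \<Longrightarrow> 0 \<le> p \<Longrightarrow> epowr x p \<le> epowr y p"
  unfolding epowr_def
  apply (cases "y = top")
   apply simp
  apply (cases x; cases y)
  apply (auto simp: powr_mono2 ennreal_le_iff2 top_unique)
  done

lemma epowr_zero: "p > 0 \<Longrightarrow> epowr 0 p = 0"
  by (simp add: epowr_def)

lemma epowr_le_imp: assumes "epowr x r \<le> ennreal c" "r > 0" "0 \<le> c"
  shows "x \<le> ennreal (c powr (1/r))"
proof (cases x)
  case (real y)
  then have "ennreal (y powr r) \<le> ennreal c" using assms by (simp add: epowr_def)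
  then have "y powr r \<le> c" using assms by simp
  then have "(y powr r) powr (1/r) \<le> c powr (1/r)" using real assms by (simp add: powr_mono2)
  then have "y \<le> c powr (1/r)" using real assms by (simp add: powr_powr)
  then show ?thesis using real by (simp add: ennreal_leI)
next
  case top
  then show ?thesis using assms by (simp add: epowr_def top_unique)
qed

lemma Linf_le: "(\<And>x. \<bar>f x\<bar> \<le> c) \<Longrightarrow> Linf_norm f \<le> ennreal c"
  unfolding Linf_norm_def by (rule Inf_lower) (auto intro: ennreal_leI)

lemma Linf_less: assumes "Linf_norm f < ennreal c" shows "AE x in lebesgue. \<bar>f x\<bar> \<le> c"
proof -
  obtain C where C: "AE x in lebesgue. ennreal \<bar>f x\<bar> \<le> C" "C < ennreal c"
    using assms unfolding Linf_norm_def by (auto simp: Inf_less_iff)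
  show ?thesis using C(1) apply eventually_elim using C(2)
  proof -
    fix x assume "ennreal \<bar>f x\<bar> \<le> C"
    then have "ennreal \<bar>f x\<bar> < ennreal c" using C(2) by (rule le_less_trans)
    then have "\<bar>f x\<bar> < c" by (subst (asm) ennreal_less_iff) auto
    then show "\<bar>f x\<bar> \<le> c" by simp
  qed
qed

context fixes N :: "('a::euclidean_space \<Rightarrow> real) \<Rightarrow> ennreal"
  assumes bq: "ball_quasi_banach_fs N"
begin

lemma N_scale: "f \<in> borel_measurable lebesgue \<Longrightarrow> N (\<lambda>x. c * f x) = ennreal \<bar>c\<bar> * N f"
  using bq unfolding ball_quasi_banach_fs_def quasi_banach_fs_def by blast

lemma N_mono: "f \<in> borel_measurable lebesgue \<Longrightarrow> g \<in> borel_measurable lebesgue \<Longrightarrow>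
   (AE x in lebesgue. \<bar>g x\<bar> \<le> \<bar>f x\<bar>) \<Longrightarrow> N g \<le> N f"
  using bq unfolding ball_quasi_banach_fs_def by blast

lemma N_fatou: "(\<And>m. F m \<in> borel_measurable lebesgue) \<Longrightarrow> f \<in> borel_measurable lebesgue \<Longrightarrow>
   (\<And>x m. 0 \<le> F m x) \<Longrightarrow> (\<And>x. incseq (\<lambda>m. F m x)) \<Longrightarrow> (\<And>x. (\<lambda>m. F m x) \<longlonglongrightarrow> f x) \<Longrightarrow>
   (\<lambda>m. N (F m)) \<longlonglongrightarrow> N f"
  using bq unfolding ball_quasi_banach_fs_def by simp

lemma N_zero: "N (\<lambda>x. 0) = 0"
  using N_scale[of "\<lambda>x. 0" 0] by simp

end

lemma mult_less_ennreal: assumes "ennreal t * L < ennreal c" "t > 0" shows "L < ennreal (c / t)"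
proof (cases L)
  case (real l)
  then have "ennreal (t * l) < ennreal c" using assms by (simp add: ennreal_mult)
  then have "t * l < c" using real assms(2) by (metis ennreal_less_iff less_eq_real_def mult_nonneg_nonneg)
  then have "l < c / t" using assms(2) by (simp add: field_simps)
  then show ?thesis using real by (simp add: ennreal_lessI)
next
  case top
  then show ?thesis using assms by (simp add: ennreal_mult_top)
qed

lemma dir2:
  fixes N :: "('a::euclidean_space \<Rightarrow> real) \<Rightarrow> ennreal"
  assumes bq: "ball_quasi_banach_fs N" and th: "0 < \<theta>" "\<theta> < 1"
    and fm: "f \<in> borel_measurable lebesgue" and b: "b > 0"
    and B: "interp_norm N Linf_norm \<theta> f < ennreal b"
  shows "convexify (weak_norm N) (1 / (1 - \<theta>)) f \<le> ennreal (4 * b)"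
proof -
  define p where "p = 1 / (1 - \<theta>)"
  have p1: "p > 1" using th by (simp add: p_def)
  have pth: "p * (1 - \<theta>) = 1" using th by (simp add: p_def)
  have W: "weak_norm N (\<lambda>x. \<bar>f x\<bar> powr p) \<le> ennreal ((4*b) powr p)"
    unfolding weak_norm_def
  proof (rule SUP_least)
    fix \<alpha> :: real assume "\<alpha> \<in> {0<..}"
    then have a: "\<alpha> > 0" by simp
    define s where "s = \<alpha> powr (1/p)"
    have s: "s > 0" using a by (simp add: s_def)
    have as: "\<alpha> = s powr p" using a p1 by (simp add: s_def powr_powr)
    have seteq: "{x. \<alpha> < \<bar>\<bar>f x\<bar> powr p\<bar>} = {x. s < \<bar>f x\<bar>}"
    proof -
      have "\<alpha> < \<bar>\<bar>f x\<bar> powr p\<bar> \<longleftrightarrow> s < \<bar>f x\<bar>" for x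
        unfolding as using s p1 
        by (smt (verit, ccfv_SIG) powr_ge_zero powr_less_mono2)
      then show ?thesis by auto
    qed
    define t where "t = (4*b/s) powr p"
    have t: "t > 0" using b s by (simp add: t_def)
    have tth: "t powr \<theta> = (4*b/s) powr (p - 1)"
    proof -
      have "p * \<theta> = p - 1" using pth by (simp add: algebra_simps)
      then show ?thesis unfolding t_def using b s by (simp add: powr_powr)
    qed
    have tth1: "t powr \<theta> * b / t = s / 4"
    proof -
      have "t powr \<theta> / t = t powr (\<theta> - 1)" using t by (simp add: powr_diff)
      also have "\<dots> = (4*b/s) powr (p*(\<theta> - 1))" unfolding t_def using b s by (simp add: powr_powr)
      also have "p*(\<theta> - 1) = -1" using pth by (simp add: algebra_simps)
      finally have "t powr \<theta> / t = s / (4*b)" using b s by (simp add: powr_minus_divide)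
      then show ?thesis using b by (simp add: field_simps)
    qed
    have Kless: "K_fun N Linf_norm t f < ennreal (t powr \<theta> * b)"
    proof -
      have "ennreal (t powr -\<theta>) * K_fun N Linf_norm t f \<le> interp_norm N Linf_norm \<theta> f"
        unfolding interp_norm_def using t by (intro SUP_upper) auto
      then have "ennreal (t powr \<theta>) * (ennreal (t powr -\<theta>) * K_fun N Linf_norm t f)
          \<le> ennreal (t powr \<theta>) * interp_norm N Linf_norm \<theta> f" by (rule mult_left_mono) simp
      moreover have "ennreal (t powr \<theta>) * (ennreal (t powr -\<theta>) * K_fun N Linf_norm t f) = K_fun N Linf_norm t f"
      proof -
        have "ennreal (t powr \<theta>) * ennreal (t powr -\<theta>) = 1"
          using t by (simp add: ennreal_mult''[symmetric] powr_minus)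
        then show ?thesis by (metis mult.assoc mult_1)
      qed
      moreover have "ennreal (t powr \<theta>) * interp_norm N Linf_norm \<theta> f < ennreal (t powr \<theta>) * ennreal b"
        using B t by (intro ennreal_mult_strict_left_mono) auto
      ultimately show ?thesis using b t by (simp add: ennreal_mult)
    qed
    then obtain f0 f1 where ff: "f0 \<in> borel_measurable lebesgue" "f1 \<in> borel_measurable lebesgue"
      "N f0 < top" "Linf_norm f1 < top" "\<And>x. f x = f0 x + f1 x"
      "N f0 + ennreal t * Linf_norm f1 < ennreal (t powr \<theta> * b)"
      unfolding K_fun_def by (auto simp: Inf_less_iff)
    have N0: "N f0 \<le> ennreal (t powr \<theta> * b)" using ff(6)
      by (meson add_increasing2 linorder_not_less nless_le zero_le)
    have "ennreal t * Linf_norm f1 < ennreal (t powr \<theta> * b)" using ff(6)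
      by (meson add_increasing linorder_not_less nless_le zero_le)
    then have "Linf_norm f1 < ennreal (t powr \<theta> * b / t)" using t
      by (rule mult_less_ennreal)
    then have "Linf_norm f1 < ennreal (s/4)" using tth1 by simp
    then have ae1: "AE x in lebesgue. \<bar>f1 x\<bar> \<le> s/4" by (rule Linf_less)
    have ind: "N (indicator {x. s < \<bar>f x\<bar>}) \<le> N (\<lambda>x. (2/s) * f0 x)"
    proof (rule N_mono[OF bq])
      show "(\<lambda>x. (2/s) * f0 x) \<in> borel_measurable lebesgue" using ff(1) by measurable
      show "(indicator {x. s < \<bar>f x\<bar>} :: _ \<Rightarrow> real) \<in> borel_measurable lebesgue" using fm by measurable
      show "AE x in lebesgue. \<bar>indicator {x. s < \<bar>f x\<bar>} x :: real\<bar> \<le> \<bar>2 / s * f0 x\<bar>"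
        using ae1
      proof eventually_elim
        case (elim x)
        show ?case
        proof (cases "s < \<bar>f x\<bar>")
          case True
          then have "\<bar>f0 x\<bar> \<ge> s/2" using elim ff(5)[of x] by linarith
          then have "2/s * \<bar>f0 x\<bar> \<ge> 1" using s by (simp add: field_simps)
          then show ?thesis using True s by (simp add: abs_mult)
        qed simp
      qed
    qed
    also have "\<dots> = ennreal (2/s) * N f0" using N_scale[OF bq ff(1), of "2/s"] s by simp
    also have "\<dots> \<le> ennreal (2/s) * ennreal (t powr \<theta> * b)" using N0 by (rule mult_left_mono) simp
    finally have ind2: "N (indicator {x. s < \<bar>f x\<bar>}) \<le> ennreal (2/s * (t powr \<theta> * b))"
      using s t b by (simp add: ennreal_mult[symmetric])
    have arith: "\<alpha> * (2/s * (t powr \<theta> * b)) \<le> (4*b) powr p"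
    proof -
      have "\<alpha> * (2/s * (t powr \<theta> * b)) = 2 * b * (s powr (p - 1) * (4*b/s) powr (p - 1))"
        unfolding as tth using s by (simp add: powr_diff field_simps)
      also have "\<dots> = 2 * b * (4*b) powr (p - 1)"
        using s b by (simp add: powr_mult[symmetric])
      also have "\<dots> \<le> 4 * b * (4*b) powr (p - 1)" using b by simp
      also have "\<dots> = (4*b) powr p" using b by (simp add: powr_diff)
      finally show ?thesis .
    qed
    show "ennreal \<alpha> * N (indicator {x. \<alpha> < \<bar>\<bar>f x\<bar> powr p\<bar>}) \<le> ennreal ((4*b) powr p)"
      unfolding seteq
    proof -
      have "ennreal \<alpha> * N (indicator {x. s < \<bar>f x\<bar>}) \<le> ennreal \<alpha> * ennreal (2/s * (t powr \<theta> * b))"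
        using ind2 by (rule mult_left_mono) simp
      also have "\<dots> = ennreal (\<alpha> * (2/s * (t powr \<theta> * b)))" 
        using a s b t by (intro ennreal_mult[symmetric]) auto
      also have "\<dots> \<le> ennreal ((4*b) powr p)" using arith by (rule ennreal_leI)
      finally show "ennreal \<alpha> * N (indicator {x. s < \<bar>f x\<bar>}) \<le> ennreal ((4*b) powr p)" .
    qed
  qed
  have "convexify (weak_norm N) p f \<le> epowr (ennreal ((4*b) powr p)) (1/p)"
    unfolding convexify_def using W p1 by (intro epowr_mono) auto
  also have "\<dots> = ennreal (((4*b) powr p) powr (1/p))" by (rule epowr_ennreal) simp
  also have "((4*b) powr p) powr (1/p) = 4*b" using p1 b by (simp add: powr_powr)
  finally show ?thesis by (simp only: p_def)
qed

lemma pow_powr: "(z::real) > 0 \<Longrightarrow> (z ^ k) powr u = (z powr u) ^ k"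
  by (simp add: powr_realpow[symmetric] powr_powr powr_power mult.commute)

lemma powr_inv_abs: "(a::real) \<ge> 0 \<Longrightarrow> r > 0 \<Longrightarrow> \<bar>a powr r\<bar> powr (1/r) = a"
  by (cases "a = 0") (auto simp: powr_powr)

lemma powr_inv_sum: "(a::real) \<ge> 0 \<Longrightarrow> b \<ge> 0 \<Longrightarrow> a * b = 0 \<Longrightarrow> r > 0 \<Longrightarrow>
   \<bar>a powr r + b powr r\<bar> powr (1/r) = a + b"
  by (cases "a = 0") (auto simp: powr_powr)

lemma geo_bound:
  fixes q c :: real
  assumes "0 < q" "q < 1" "c \<ge> 0"
  shows "(\<Sum>k<m. c * q ^ k) \<le> c / (1 - q)"
proof -
  have "(\<Sum>k<m. c * q ^ k) = c * (\<Sum>k<m. q ^ k)" using sum_distrib_left[of c "\<lambda>k. q^k" "{..<m}"] by simp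
  also have "\<dots> \<le> c * (1 / (1 - q))"
    using geometric_sum_less[of q "{..<m}"] assms by (intro mult_left_mono) auto
  finally show ?thesis by simp
qed

lemma dir1_core:
  fixes N :: "('a::euclidean_space \<Rightarrow> real) \<Rightarrow> ennreal"
  assumes bq: "ball_quasi_banach_fs N" and r: "r > 0"
    and bb: "ball_banach_fs (convexify N (1 / r))"
    and fm: "f \<in> borel_measurable lebesgue" and p1: "p > 1" and w: "w > 0" and l: "l > 0"
    and hw: "\<And>s. s > 0 \<Longrightarrow> ennreal (s powr p) * N (indicator {x. s < \<bar>f x\<bar>}) \<le> ennreal (w powr p)"
  shows "N (\<lambda>x. f x * indicator {x. l < \<bar>f x\<bar>} x)
     \<le> ennreal (2 * (1 - (2 powr (1-p)) powr r) powr (-1/r) * (w powr p * l powr (1-p)))"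
proof -
  define D where "D = w powr p * l powr (1-p)"
  have D: "D > 0" using w l by (simp add: D_def)
  define \<rho> where "\<rho> = 2 powr (1-p)"
  have \<rho>: "0 < \<rho>" "\<rho> < 1" using p1 by (auto simp: \<rho>_def intro: powr_less_one)
  define q where "q = \<rho> powr r"
  have q: "0 < q" "q < 1" using \<rho> r powr_less_mono2[of r \<rho> 1] by (auto simp: q_def)
  define E where "E k = {x. 2^k*l < \<bar>f x\<bar> \<and> \<bar>f x\<bar> \<le> 2^(k+1)*l}" for k :: nat
  define tm where "tm k x = 2^(k+1)*l * indicator (E k) x" for k x
  define h where "h m x = (\<Sum>k<m. tm k x)" for m x
  have tm_meas: "tm k \<in> borel_measurable lebesgue" for k
    unfolding tm_def E_def using fm by measurable
  have h_meas: "h m \<in> borel_measurable lebesgue" for m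
    unfolding h_def using tm_meas by measurable
  have tm_nn: "tm k x \<ge> 0" for k x using l by (simp add: tm_def)
  have h_nn: "h m x \<ge> 0" for m x unfolding h_def using tm_nn by (simp add: sum_nonneg)
  have disj: "h m x * tm m x = 0" for m x
  proof (cases "x \<in> E m")
    case True
    have "x \<notin> E k" if "k < m" for k
    proof -
      have "(2::real)^(k+1) \<le> 2^m" using that by (intro power_increasing) auto
      then have "2^(k+1)*l \<le> 2^m*l" using l by simp
      then show ?thesis using True by (auto simp: E_def)
    qed
    then have "h m x = 0" unfolding h_def tm_def by simp
    then show ?thesis by simp
  qed (simp add: tm_def)
  have trm: "N (tm k) \<le> ennreal (2 * D * \<rho> ^ k)" for k
  proof -
    define s where "s = 2^k * l"
    have s: "s > 0" using l by (simp add: s_def)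
    have "N (tm k) \<le> N (\<lambda>x. (2 * s) * indicator {x. s < \<bar>f x\<bar>} x)"
    proof (rule N_mono[OF bq])
      show "(\<lambda>x. (2 * s) * indicator {x. s < \<bar>f x\<bar>} x :: real) \<in> borel_measurable lebesgue" using fm by measurable
      show "tm k \<in> borel_measurable lebesgue" by (rule tm_meas)
      show "AE x in lebesgue. \<bar>tm k x\<bar> \<le> \<bar>2 * s * indicator {x. s < \<bar>f x\<bar>} x\<bar>"
        using l s by (auto simp: tm_def E_def s_def indicator_def)
    qed
    also have "\<dots> = ennreal (2 * s) * N (indicator {x. s < \<bar>f x\<bar>})"
      using N_scale[OF bq, of "indicator {x. s < \<bar>f x\<bar>}" "2 * s"] fm s by simp
    also have "ennreal (2 * s) = ennreal (2 * s powr (1-p)) * ennreal (s powr p)"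
    proof -
      have "2 * s = 2 * s powr (1-p) * s powr p" using s by (simp add: powr_add[symmetric])
      then show ?thesis using s by (simp add: ennreal_mult[symmetric])
    qed
    also have "ennreal (2 * s powr (1-p)) * ennreal (s powr p) * N (indicator {x. s < \<bar>f x\<bar>})
        \<le> ennreal (2 * s powr (1-p)) * ennreal (w powr p)"
      using hw[OF s] by (simp add: mult.assoc mult_left_mono)
    also have "\<dots> = ennreal (2 * s powr (1-p) * w powr p)" using s by (simp add: ennreal_mult)
    also have "2 * s powr (1-p) * w powr p = 2 * D * \<rho> ^ k"
    proof -
      have "s powr (1-p) = (2^k) powr (1-p) * l powr (1-p)" unfolding s_def using l by (simp add: powr_mult)
      moreover have "((2::real)^k) powr (1-p) = \<rho>^k" unfolding \<rho>_def by (rule pow_powr) simp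
      ultimately show ?thesis by (simp add: D_def)
    qed
    finally show ?thesis .
  qed
  have ind: "epowr (N (h m)) r \<le> ennreal (\<Sum>k<m. (2*D) powr r * q ^ k)" for m
  proof (induction m)
    case 0
    have "h 0 = (\<lambda>x. 0)" by (simp add: h_def fun_eq_iff)
    then show ?case using N_zero[OF bq] r by (simp add: epowr_zero)
  next
    case (Suc m)
    define U where "U x = h m x powr r" for x
    define V where "V x = tm m x powr r" for x
    have Um: "U \<in> borel_measurable lebesgue" unfolding U_def using h_meas by measurable
    have Vm: "V \<in> borel_measurable lebesgue" unfolding V_def using tm_meas by measurable
    have tri: "convexify N (1/r) (\<lambda>x. U x + V x) \<le> convexify N (1/r) U + convexify N (1/r) V"
      using bb Um Vm unfolding ball_banach_fs_def by blast
    have e1: "(\<lambda>x. \<bar>U x + V x\<bar> powr (1/r)) = h (Suc m)"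
      unfolding U_def V_def h_def using powr_inv_sum[OF h_nn tm_nn disj r]
      by (simp add: fun_eq_iff h_def)
    have e2: "(\<lambda>x. \<bar>U x\<bar> powr (1/r)) = h m"
      unfolding U_def using powr_inv_abs[OF h_nn r] by (simp add: fun_eq_iff)
    have e3: "(\<lambda>x. \<bar>V x\<bar> powr (1/r)) = tm m"
      unfolding V_def using powr_inv_abs[OF tm_nn r] by (simp add: fun_eq_iff)
    have "epowr (N (h (Suc m))) r \<le> epowr (N (h m)) r + epowr (N (tm m)) r"
      using tri unfolding convexify_def e1 e2 e3 by simp
    also have "\<dots> \<le> ennreal (\<Sum>k<m. (2*D) powr r * q ^ k) + epowr (ennreal (2 * D * \<rho> ^ m)) r"
      using Suc.IH epowr_mono[OF trm[of m], of r] r by (intro add_mono) auto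
    also have "epowr (ennreal (2 * D * \<rho> ^ m)) r = ennreal ((2*D) powr r * q ^ m)"
    proof -
      have "epowr (ennreal (2 * D * \<rho> ^ m)) r = ennreal ((2 * D * \<rho> ^ m) powr r)"
        using D \<rho> by (intro epowr_ennreal) simp
      also have "(2 * D * \<rho> ^ m) powr r = (2 * D) powr r * (\<rho> ^ m) powr r"
        using D \<rho> by (intro powr_mult; simp)
      also have "(\<rho> ^ m) powr r = q ^ m" unfolding q_def by (rule pow_powr[OF \<rho>(1)])
      finally show ?thesis .
    qed
    also have "ennreal (\<Sum>k<m. (2*D) powr r * q ^ k) + ennreal ((2*D) powr r * q ^ m)
        = ennreal (\<Sum>k<Suc m. (2*D) powr r * q ^ k)"
    proof -
      have "(\<Sum>k<m. (2*D) powr r * q ^ k) \<ge> 0" using q by (intro sum_nonneg) simp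
      moreover have "(2*D) powr r * q ^ m \<ge> 0" using q by simp
      ultimately have "ennreal (\<Sum>k<m. (2*D) powr r * q ^ k) + ennreal ((2*D) powr r * q ^ m)
          = ennreal ((\<Sum>k<m. (2*D) powr r * q ^ k) + (2*D) powr r * q ^ m)"
        by (rule ennreal_plus[symmetric])
      then show ?thesis by simp
    qed
    finally show ?case .
  qed
  define C0 where "C0 = 2 * (1 - q) powr (-1/r)"
  have hb: "N (h m) \<le> ennreal (C0 * D)" for m
  proof -
    have "epowr (N (h m)) r \<le> ennreal ((2*D) powr r / (1 - q))"
      by (rule order_trans[OF ind[of m] ennreal_leI[OF geo_bound[OF q powr_ge_zero]]])
    then have "N (h m) \<le> ennreal (((2*D) powr r / (1 - q)) powr (1/r))"
      using q r by (intro epowr_le_imp) auto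
    also have "((2*D) powr r / (1 - q)) powr (1/r) = C0 * D"
    proof -
      have "((2*D) powr r / (1 - q)) powr (1/r) = ((2*D) powr r) powr (1/r) / (1 - q) powr (1/r)"
        using q D by (intro powr_divide; simp)
      also have "((2*D) powr r) powr (1/r) = 2*D" using D r by (simp add: powr_powr)
      also have "(1 - q) powr (-1/r) = 1 / (1 - q) powr (1/r)"
        using q by (simp add: powr_minus_divide)
      then have "2 * D / (1 - q) powr (1/r) = C0 * D" unfolding C0_def by simp
      finally show ?thesis .
    qed
    finally show ?thesis .
  qed
  define g where "g m x = \<bar>f x\<bar> * indicator {x. l < \<bar>f x\<bar> \<and> \<bar>f x\<bar> \<le> 2^m*l} x" for m x
  define G where "G x = \<bar>f x\<bar> * indicator {x. l < \<bar>f x\<bar>} x" for x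
  have g_meas: "g m \<in> borel_measurable lebesgue" for m unfolding g_def using fm by measurable
  have G_meas: "G \<in> borel_measurable lebesgue" unfolding G_def using fm by measurable
  have gh: "g m x \<le> h m x" for m x
  proof (induction m)
    case 0
    then show ?case using l by (simp add: g_def h_def indicator_def)
  next
    case (Suc m)
    have hS: "h (Suc m) x = h m x + tm m x" by (simp add: h_def)
    show ?case
    proof (cases "\<bar>f x\<bar> \<le> 2^m*l")
      case True
      then have "g (Suc m) x = g m x" using l by (auto simp: g_def indicator_def)
      then show ?thesis using Suc.IH hS tm_nn[of m x] by linarith
    next
      case False
      show ?thesis
      proof (cases "\<bar>f x\<bar> \<le> 2^(Suc m)*l")
        case True
        then have "x \<in> E m" using False by (simp add: E_def)
        then have "tm m x = 2^(Suc m)*l" by (simp add: tm_def)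
        moreover have "g (Suc m) x \<le> \<bar>f x\<bar>" by (simp add: g_def indicator_def)
        ultimately show ?thesis using True h_nn[of m x] hS by linarith
      next
        case F2: False
        then have "g (Suc m) x = 0" by (simp add: g_def indicator_def)
        then show ?thesis using h_nn[of m x] hS tm_nn[of m x] by linarith
      qed
    qed
  qed
  have Ng: "N (g m) \<le> ennreal (C0 * D)" for m
    using N_mono[OF bq h_meas g_meas, of m m] gh hb[of m] h_nn
  proof -
    have "N (g m) \<le> N (h m)"
    proof (rule N_mono[OF bq h_meas g_meas], rule AE_I2)
      fix x show "\<bar>g m x\<bar> \<le> \<bar>h m x\<bar>" using gh[of m x] h_nn[of m x] by (simp add: g_def)
    qed
    then show ?thesis using hb[of m] by (rule order_trans)
  qed
  have lim: "(\<lambda>m. N (g m)) \<longlonglongrightarrow> N G"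
  proof (rule N_fatou[OF bq g_meas G_meas])
    show "0 \<le> g m x" for x m by (simp add: g_def)
    show "incseq (\<lambda>m. g m x)" for x
    proof (rule incseq_SucI)
      fix m
      have "(2::real)^m * l \<le> 2^(Suc m) * l" using l by simp
      then show "g m x \<le> g (Suc m) x" by (auto simp: g_def indicator_def)
    qed
    show "(\<lambda>m. g m x) \<longlonglongrightarrow> G x" for x
    proof (rule tendsto_eventually)
      obtain M where M: "\<bar>f x\<bar> / l < 2 ^ M" using real_arch_pow[of 2 "\<bar>f x\<bar> / l"] by auto
      have "g m x = G x" if "m \<ge> M" for m
      proof -
        have "(2::real)^M \<le> 2^m" using that by (intro power_increasing) auto
        then have "2^M*l \<le> 2^m*l" using l by (intro mult_right_mono) auto
        moreover have "\<bar>f x\<bar> < 2^M*l" using M l by (simp add: field_simps)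
        ultimately have "\<bar>f x\<bar> \<le> 2^m*l" by linarith
        then show ?thesis by (auto simp: g_def G_def indicator_def)
      qed
      then show "\<forall>\<^sub>F m in sequentially. g m x = G x" by (auto simp: eventually_sequentially)
    qed
  qed
  have NG: "N G \<le> ennreal (C0 * D)"
    using lim Ng by (intro LIMSEQ_le_const2) auto
  have "N (\<lambda>x. f x * indicator {x. l < \<bar>f x\<bar>} x) \<le> N G"
    using fm by (intro N_mono[OF bq G_meas]) (auto simp: G_def abs_mult)
  also note NG
  finally show ?thesis by (simp only: C0_def D_def q_def \<rho>_def)
qed

lemma le_mult_approx:
  assumes c: "c > 0" and h: "\<And>w. w > 0 \<Longrightarrow> Y < ennreal w \<Longrightarrow> X \<le> ennreal (c * w)"
  shows "X \<le> ennreal c * Y"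
proof (cases Y)
  case top
  then show ?thesis using c by (simp add: ennreal_mult_top)
next
  case (real y)
  show ?thesis
  proof (rule ennreal_le_epsilon)
    fix e :: real assume e: "0 < e"
    have w: "y + e / c > 0" using real e c by (simp add: add_nonneg_pos)
    have "Y < ennreal (y + e / c)" using real e c by (simp add: ennreal_lessI)
    then have "X \<le> ennreal (c * (y + e / c))" using h w by blast
    also have "c * (y + e / c) = c * y + e" using c by (simp add: field_simps)
    also have "ennreal (c * y + e) = ennreal c * Y + ennreal e"
      using real c e by (simp add: ennreal_plus ennreal_mult)
    finally show "X \<le> ennreal c * Y + ennreal e" .
  qed
qed

lemma dir1:
  fixes N :: "('a::euclidean_space \<Rightarrow> real) \<Rightarrow> ennreal"
  assumes bq: "ball_quasi_banach_fs N" and th: "0 < \<theta>" "\<theta> < 1" and r: "r > 0"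
    and bb: "ball_banach_fs (convexify N (1 / r))"
    and fm: "f \<in> borel_measurable lebesgue" and w: "w > 0"
    and A: "weak_norm N (\<lambda>x. \<bar>f x\<bar> powr (1/(1-\<theta>))) \<le> ennreal (w powr (1/(1-\<theta>)))"
  shows "interp_norm N Linf_norm \<theta> f
    \<le> ennreal ((2 * (1 - (2 powr (1-1/(1-\<theta>))) powr r) powr (-1/r) + 1) * w)"
proof -
  define p where "p = 1/(1-\<theta>)"
  have p1: "p > 1" using th by (simp add: p_def)
  have pth: "p * (1 - \<theta>) = 1" using th by (simp add: p_def)
  define C0 where "C0 = 2 * (1 - (2 powr (1-p)) powr r) powr (-1/r)"
  have C0: "C0 \<ge> 0" by (simp add: C0_def)
  have hw: "ennreal (s powr p) * N (indicator {x. s < \<bar>f x\<bar>}) \<le> ennreal (w powr p)" if s: "s > 0" for s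
  proof -
    have seteq: "{x. s powr p < \<bar>\<bar>f x\<bar> powr p\<bar>} = {x. s < \<bar>f x\<bar>}"
    proof -
      have "s powr p < \<bar>\<bar>f x\<bar> powr p\<bar> \<longleftrightarrow> s < \<bar>f x\<bar>" for x
        using s p1 by (smt (verit, ccfv_SIG) powr_ge_zero powr_less_mono2)
      then show ?thesis by auto
    qed
    have "ennreal (s powr p) * N (indicator {x. s powr p < \<bar>\<bar>f x\<bar> powr p\<bar>})
       \<le> weak_norm N (\<lambda>x. \<bar>f x\<bar> powr p)"
      unfolding weak_norm_def using s by (intro SUP_upper) auto
    moreover have A': "weak_norm N (\<lambda>x. \<bar>f x\<bar> powr p) \<le> ennreal (w powr p)" using A by (simp add: p_def)
    ultimately have "ennreal (s powr p) * N (indicator {x. s powr p < \<bar>\<bar>f x\<bar> powr p\<bar>}) \<le> ennreal (w powr p)"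
      by (rule order_trans)
    then show ?thesis by (simp only: seteq)
  qed
  show ?thesis
    unfolding interp_norm_def
  proof (rule SUP_least)
    fix t :: real assume "t \<in> {0<..}"
    then have t: "t > 0" by simp
    define l where "l = w * t powr (\<theta> - 1)"
    have l: "l > 0" using w t by (simp add: l_def)
    define f0 where "f0 x = f x * indicator {x. l < \<bar>f x\<bar>} x" for x
    define f1 where "f1 x = f x - f0 x" for x
    have f0m: "f0 \<in> borel_measurable lebesgue" unfolding f0_def using fm by measurable
    have f1m: "f1 \<in> borel_measurable lebesgue" unfolding f1_def using fm f0m by measurable
    have arith1: "w powr p * l powr (1-p) = w * t powr \<theta>"
    proof -
      have "l powr (1-p) = w powr (1-p) * (t powr (\<theta> - 1)) powr (1-p)"
        unfolding l_def using w t by (intro powr_mult; simp)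
      also have "(t powr (\<theta> - 1)) powr (1-p) = t powr ((\<theta> - 1) * (1-p))" by (simp add: powr_powr)
      also have "(\<theta> - 1) * (1-p) = \<theta>" using pth by (simp add: algebra_simps)
      finally have "w powr p * l powr (1-p) = (w powr p * w powr (1-p)) * t powr \<theta>" by simp
      also have "w powr p * w powr (1-p) = w" using w by (simp add: powr_add[symmetric])
      finally show ?thesis .
    qed
    have arith2: "t * l = w * t powr \<theta>"
    proof -
      have "t * t powr (\<theta> - 1) = t powr \<theta>" using t by (simp add: powr_mult_base)
      then show ?thesis unfolding l_def by (simp add: algebra_simps)
    qed
    have N0: "N f0 \<le> ennreal (C0 * (w * t powr \<theta>))"
      using dir1_core[OF bq r bb fm p1 w l hw] unfolding f0_def C0_def arith1 by simp
    have L1: "Linf_norm f1 \<le> ennreal l"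
        using l by (intro Linf_le) (auto simp: f1_def f0_def indicator_def)
    have "K_fun N Linf_norm t f \<le> N f0 + ennreal t * Linf_norm f1"
      unfolding K_fun_def
    proof (rule Inf_lower, intro CollectI exI conjI)
      show "N f0 + ennreal t * Linf_norm f1 = N f0 + ennreal t * Linf_norm f1" ..
      show "N f0 < top" using le_less_trans[OF N0 ennreal_less_top] .
      show "Linf_norm f1 < top" using le_less_trans[OF L1 ennreal_less_top] .
      show "\<forall>x. f x = f0 x + f1 x" by (simp add: f1_def)
    qed (use f0m f1m in auto)
    also have "\<dots> \<le> ennreal (C0 * (w * t powr \<theta>)) + ennreal t * ennreal l"
      using N0 L1 by (intro add_mono mult_left_mono) auto
    also have "\<dots> = ennreal ((C0 + 1) * (w * t powr \<theta>))"
    proof -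
      have "ennreal t * ennreal l = ennreal (t * l)" using t l by (intro ennreal_mult[symmetric]) auto
      moreover have "ennreal (C0 * (w * t powr \<theta>)) + ennreal (t * l) = ennreal (C0 * (w * t powr \<theta>) + t * l)"
        using C0 w t l by (intro ennreal_plus[symmetric]) auto
      moreover have "C0 * (w * t powr \<theta>) + t * l = (C0 + 1) * (w * t powr \<theta>)" using arith2 by (simp add: algebra_simps)
      ultimately show ?thesis by simp
    qed
    finally have K: "K_fun N Linf_norm t f \<le> ennreal ((C0 + 1) * (w * t powr \<theta>))" .
    have "ennreal (t powr - \<theta>) * K_fun N Linf_norm t f \<le> ennreal (t powr - \<theta>) * ennreal ((C0 + 1) * (w * t powr \<theta>))"
      using K by (rule mult_left_mono) simp
    also have "\<dots> = ennreal ((C0 + 1) * w)"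
    proof -
      have "t powr - \<theta> * ((C0 + 1) * (w * t powr \<theta>)) = (C0 + 1) * w * (t powr - \<theta> * t powr \<theta>)"
        by (simp add: algebra_simps)
      also have "t powr - \<theta> * t powr \<theta> = 1" using t by (simp add: powr_add[symmetric])
      finally have e: "t powr - \<theta> * ((C0 + 1) * (w * t powr \<theta>)) = (C0 + 1) * w" by simp
      have "ennreal (t powr - \<theta>) * ennreal ((C0 + 1) * (w * t powr \<theta>)) = ennreal (t powr - \<theta> * ((C0 + 1) * (w * t powr \<theta>)))"
        using C0 w t by (intro ennreal_mult[symmetric]) auto
      then show ?thesis using e by simp
    qed
    finally show "ennreal (t powr - \<theta>) * K_fun N Linf_norm t f
        \<le> ennreal ((2 * (1 - (2 powr (1-1/(1-\<theta>))) powr r) powr (-1/r) + 1) * w)"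
      by (simp only: C0_def p_def)
  qed
qed


lemma weak_from_conv:
  assumes th: "0 < \<theta>" "\<theta> < 1" and w: "w > 0"
    and lt: "epowr W (1 / (1 / (1 - \<theta>))) < ennreal w"
  shows "W \<le> ennreal (w powr (1 / (1 - \<theta>)))"
proof (cases W)
  case top
  then show ?thesis using lt by (simp add: epowr_def)
next
  case (real a)
  have e: "1 / (1 / (1 - \<theta>)) = 1 - \<theta>" using th by simp
  have "ennreal (a powr (1 - \<theta>)) < ennreal w" using lt real e by (simp add: epowr_ennreal)
  then have "a powr (1 - \<theta>) < w" by (subst (asm) ennreal_less_iff) auto
  then have "(a powr (1 - \<theta>)) powr (1 / (1 - \<theta>)) \<le> w powr (1 / (1 - \<theta>))"
    using th by (intro powr_mono2) auto
  moreover have "(a powr (1 - \<theta>)) powr (1 / (1 - \<theta>)) = a" using th real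
    by (cases "a = 0") (auto simp: powr_powr)
  ultimately show ?thesis using real by (simp add: ennreal_leI)
qed

theorem theorem4p1:
  fixes N :: "('a::euclidean_space \<Rightarrow> real) \<Rightarrow> ennreal" and \<theta> :: real
  assumes "ball_quasi_banach_fs N"
    and "0 < \<theta>" and "\<theta> < 1"
    and "\<exists>r>0. ball_banach_fs (convexify N (1 / r))"
  shows "\<exists>C::real. C > 0 \<and>
    (\<forall>f \<in> borel_measurable lebesgue.
       interp_norm N Linf_norm \<theta> f \<le> ennreal C * convexify (weak_norm N) (1 / (1 - \<theta>)) f \<and>
       convexify (weak_norm N) (1 / (1 - \<theta>)) f \<le> ennreal C * interp_norm N Linf_norm \<theta> f)"
proof -
  obtain r where r: "r > 0" "ball_banach_fs (convexify N (1 / r))" using assms(4) by blast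
  define C1 where "C1 = 2 * (1 - (2 powr (1-1/(1-\<theta>))) powr r) powr (-1/r) + 1"
  have C1: "C1 > 0" unfolding C1_def by (simp add: add_nonneg_pos)
  define C where "C = max C1 4"
  have C: "C > 0" using C1 by (simp add: C_def)
  show ?thesis
  proof (intro exI[of _ C] conjI ballI C)
    fix f :: "'a \<Rightarrow> real" assume fm: "f \<in> borel_measurable lebesgue"
    have "interp_norm N Linf_norm \<theta> f \<le> ennreal C1 * convexify (weak_norm N) (1 / (1 - \<theta>)) f"
    proof (rule le_mult_approx[OF C1])
      fix w :: real assume w: "w > 0" and lt: "convexify (weak_norm N) (1 / (1 - \<theta>)) f < ennreal w"
      have "weak_norm N (\<lambda>x. \<bar>f x\<bar> powr (1/(1-\<theta>))) \<le> ennreal (w powr (1/(1-\<theta>)))"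
        using lt unfolding convexify_def by (intro weak_from_conv[OF assms(2,3) w])
      from dir1[OF assms(1-3) r fm w this]
      show "interp_norm N Linf_norm \<theta> f \<le> ennreal (C1 * w)" unfolding C1_def .
    qed
    also have "\<dots> \<le> ennreal C * convexify (weak_norm N) (1 / (1 - \<theta>)) f"
      by (intro mult_right_mono ennreal_leI) (auto simp: C_def)
    finally show "interp_norm N Linf_norm \<theta> f \<le> ennreal C * convexify (weak_norm N) (1 / (1 - \<theta>)) f" .
    have "convexify (weak_norm N) (1 / (1 - \<theta>)) f \<le> ennreal 4 * interp_norm N Linf_norm \<theta> f"
    proof (rule le_mult_approx)
      fix b :: real assume b: "b > 0" and lt: "interp_norm N Linf_norm \<theta> f < ennreal b"
      show "convexify (weak_norm N) (1 / (1 - \<theta>)) f \<le> ennreal (4 * b)"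
        by (rule dir2[OF assms(1-3) fm b lt])
    qed simp
    also have "\<dots> \<le> ennreal C * interp_norm N Linf_norm \<theta> f"
      by (intro mult_right_mono ennreal_leI) (auto simp: C_def)
    finally show "convexify (weak_norm N) (1 / (1 - \<theta>)) f \<le> ennreal C * interp_norm N Linf_norm \<theta> f" .
  qed
qed

end
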